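(* Let $(X,\tau)$ be a topological space and let $\delta_1,\delta_2$ be quasi-proximities compatible with $\tau$ such that $\delta_1$ is coarser than $\delta_2$ and both $\mathcal{V}_{\delta_1}$ and $\mathcal{V}_{\delta_2}$ are transitive. If $|\pi(\delta_1)\cap T(\tau)|>1$, then $|\pi(\delta_2)\cap T(\tau)|>1$.
   Context: Quasi-uniformities and quasi-proximities are in the sense of Fletcher–Lindgren. $\delta_1$ coarser than $\delta_2$ means that whenever $A\,\delta_2\,B$ then $A\,\delta_1\,B$ (equivalently $\mathcal{V}_{\delta_1}\subseteq\mathcal{V}_{\delta_2}$). $\pi(\delta)$ is the set of quasi-uniformities inducing $\delta$ and $\mathcal{V}_\delta$ is its coarsest (totally bounded) element. $T(\tau)$ is the set of quasi-uniformities compatible with $\tau$ that have a base of transitive entourages. *)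

theory Defs
  imports "HOL-Analysis.Analysis"
begin

definition quasi_uniformity :: "'a set \<Rightarrow> ('a \<times> 'a) set set \<Rightarrow> bool" where
  "quasi_uniformity X \<U> \<longleftrightarrow>
     \<U> \<noteq> {} \<and>
     (\<forall>U\<in>\<U>. U \<subseteq> X \<times> X \<and> Id_on X \<subseteq> U) \<and>
     (\<forall>U\<in>\<U>. \<forall>V. U \<subseteq> V \<and> V \<subseteq> X \<times> X \<longrightarrow> V \<in> \<U>) \<and>
     (\<forall>U\<in>\<U>. \<forall>V\<in>\<U>. U \<inter> V \<in> \<U>) \<and>
     (\<forall>U\<in>\<U>. \<exists>V\<in>\<U>. V O V \<subseteq> U)"

definition qu_compatible :: "'a topology \<Rightarrow> ('a \<times> 'a) set set \<Rightarrow> bool" where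
  "qu_compatible \<tau> \<U> \<longleftrightarrow>
     (\<forall>G. openin \<tau> G \<longleftrightarrow> G \<subseteq> topspace \<tau> \<and> (\<forall>x\<in>G. \<exists>U\<in>\<U>. U `` {x} \<subseteq> G))"

definition qu_transitive :: "('a \<times> 'a) set set \<Rightarrow> bool" where
  "qu_transitive \<U> \<longleftrightarrow> (\<forall>U\<in>\<U>. \<exists>W\<in>\<U>. W \<subseteq> U \<and> trans W)"

definition quasi_proximity :: "'a set \<Rightarrow> ('a set \<Rightarrow> 'a set \<Rightarrow> bool) \<Rightarrow> bool" where
  "quasi_proximity X \<delta> \<longleftrightarrow>
     (\<forall>A B C. A \<subseteq> X \<and> B \<subseteq> X \<and> C \<subseteq> X \<longrightarrow>
        (\<delta> A (B \<union> C) \<longleftrightarrow> \<delta> A B \<or> \<delta> A C) \<and>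
        (\<delta> (A \<union> B) C \<longleftrightarrow> \<delta> A C \<or> \<delta> B C)) \<and>
     (\<forall>A. A \<subseteq> X \<longrightarrow> \<not> \<delta> A {} \<and> \<not> \<delta> {} A) \<and>
     (\<forall>x\<in>X. \<delta> {x} {x}) \<and>
     (\<forall>A B. A \<subseteq> X \<and> B \<subseteq> X \<and> \<not> \<delta> A B \<longrightarrow>
        (\<exists>C. C \<subseteq> X \<and> \<not> \<delta> A C \<and> \<not> \<delta> (X - C) B))"

definition qp_compatible :: "'a topology \<Rightarrow> ('a set \<Rightarrow> 'a set \<Rightarrow> bool) \<Rightarrow> bool" where
  "qp_compatible \<tau> \<delta> \<longleftrightarrow>
     (\<forall>A. A \<subseteq> topspace \<tau> \<longrightarrow> \<tau> closure_of A = {x \<in> topspace \<tau>. \<delta> {x} A})"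

definition qprox_of :: "('a \<times> 'a) set set \<Rightarrow> 'a set \<Rightarrow> 'a set \<Rightarrow> bool" where
  "qprox_of \<U> A B \<longleftrightarrow> (\<forall>U\<in>\<U>. (A \<times> B) \<inter> U \<noteq> {})"

definition qp_coarser :: "'a set \<Rightarrow> ('a set \<Rightarrow> 'a set \<Rightarrow> bool) \<Rightarrow> ('a set \<Rightarrow> 'a set \<Rightarrow> bool) \<Rightarrow> bool" where
  "qp_coarser X \<delta>1 \<delta>2 \<longleftrightarrow> (\<forall>A B. A \<subseteq> X \<and> B \<subseteq> X \<and> \<delta>2 A B \<longrightarrow> \<delta>1 A B)"

definition qu_class :: "'a set \<Rightarrow> ('a set \<Rightarrow> 'a set \<Rightarrow> bool) \<Rightarrow> ('a \<times> 'a) set set set" where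
  "qu_class X \<delta> = {\<U>. quasi_uniformity X \<U> \<and>
      (\<forall>A B. A \<subseteq> X \<and> B \<subseteq> X \<longrightarrow> (qprox_of \<U> A B \<longleftrightarrow> \<delta> A B))}"

definition coarsest_qu :: "'a set \<Rightarrow> ('a set \<Rightarrow> 'a set \<Rightarrow> bool) \<Rightarrow> ('a \<times> 'a) set set" where
  "coarsest_qu X \<delta> = (THE \<V>. \<V> \<in> qu_class X \<delta> \<and> (\<forall>\<U>\<in>qu_class X \<delta>. \<V> \<subseteq> \<U>))"

definition trans_qus :: "'a topology \<Rightarrow> ('a \<times> 'a) set set set" where
  "trans_qus \<tau> = {\<U>. quasi_uniformity (topspace \<tau>) \<U> \<and> qu_compatible \<tau> \<U> \<and> qu_transitive \<U>}"

end

theory Submission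
  imports Defs
begin

definition EE :: "'a set \<Rightarrow> ('a set \<times> 'a set) set \<Rightarrow> ('a \<times> 'a) set" where
  "EE X F = X \<times> X - (\<Union>p\<in>F. fst p \<times> snd p)"

definition goodF :: "'a set \<Rightarrow> ('a set \<Rightarrow> 'a set \<Rightarrow> bool) \<Rightarrow> ('a set \<times> 'a set) set \<Rightarrow> bool" where
  "goodF X \<delta> F \<longleftrightarrow> finite F \<and> (\<forall>p\<in>F. fst p \<subseteq> X \<and> snd p \<subseteq> X \<and> \<not> \<delta> (fst p) (snd p))"

definition V0 :: "'a set \<Rightarrow> ('a set \<Rightarrow> 'a set \<Rightarrow> bool) \<Rightarrow> ('a \<times> 'a) set set" where
  "V0 X \<delta> = {Z. Z \<subseteq> X \<times> X \<and> (\<exists>F. goodF X \<delta> F \<and> EE X F \<subseteq> Z)}"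

definition join :: "'a set \<Rightarrow> ('a \<times> 'a) set set \<Rightarrow> ('a \<times> 'a) set set \<Rightarrow> ('a \<times> 'a) set set" where
  "join X \<U> \<V> = {Z. Z \<subseteq> X \<times> X \<and> (\<exists>U\<in>\<U>. \<exists>V\<in>\<V>. U \<inter> V \<subseteq> Z)}"

lemma EE_empty[simp]: "EE X {} = X \<times> X" by (simp add: EE_def)
lemma EE_insert: "EE X (insert p F) = EE X F - fst p \<times> snd p" by (auto simp: EE_def)
lemma EE_sub: "EE X F \<subseteq> X \<times> X" by (auto simp: EE_def)
lemma EE_Un: "EE X (F \<union> G) = EE X F \<inter> EE X G" by (auto simp: EE_def)

lemma qu_sub: "quasi_uniformity X \<U> \<Longrightarrow> U \<in> \<U> \<Longrightarrow> U \<subseteq> X \<times> X"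
  by (simp add: quasi_uniformity_def)
lemma qu_id: "quasi_uniformity X \<U> \<Longrightarrow> U \<in> \<U> \<Longrightarrow> Id_on X \<subseteq> U"
  by (simp add: quasi_uniformity_def)
lemma qu_up: "quasi_uniformity X \<U> \<Longrightarrow> U \<in> \<U> \<Longrightarrow> U \<subseteq> V \<Longrightarrow> V \<subseteq> X \<times> X \<Longrightarrow> V \<in> \<U>"
  unfolding quasi_uniformity_def by blast
lemma qu_int: "quasi_uniformity X \<U> \<Longrightarrow> U \<in> \<U> \<Longrightarrow> V \<in> \<U> \<Longrightarrow> U \<inter> V \<in> \<U>"
  unfolding quasi_uniformity_def by blast
lemma qu_comp: "quasi_uniformity X \<U> \<Longrightarrow> U \<in> \<U> \<Longrightarrow> \<exists>V\<in>\<U>. V O V \<subseteq> U"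
  unfolding quasi_uniformity_def by blast
lemma qu_full: "quasi_uniformity X \<U> \<Longrightarrow> X \<times> X \<in> \<U>"
proof -
  assume qu: "quasi_uniformity X \<U>"
  have "\<U> \<noteq> {}" using qu unfolding quasi_uniformity_def by (rule conjunct1)
  then obtain U where "U \<in> \<U>" by blast
  thus ?thesis using qu_up[OF qu, of U "X \<times> X"] qu_sub[OF qu, of U] by simp
qed

lemma qp_ax1: "quasi_proximity X \<delta> \<Longrightarrow> (\<forall>A B C. A \<subseteq> X \<and> B \<subseteq> X \<and> C \<subseteq> X \<longrightarrow>
        (\<delta> A (B \<union> C) \<longleftrightarrow> \<delta> A B \<or> \<delta> A C) \<and>
        (\<delta> (A \<union> B) C \<longleftrightarrow> \<delta> A C \<or> \<delta> B C))"
  unfolding quasi_proximity_def by (rule conjunct1)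
lemma qp_union_l: "quasi_proximity X \<delta> \<Longrightarrow> A \<subseteq> X \<Longrightarrow> B \<subseteq> X \<Longrightarrow> C \<subseteq> X \<Longrightarrow>
   \<delta> (A \<union> B) C \<longleftrightarrow> \<delta> A C \<or> \<delta> B C"
  using qp_ax1[rule_format, of X \<delta> A B C] by simp
lemma qp_union_r: "quasi_proximity X \<delta> \<Longrightarrow> A \<subseteq> X \<Longrightarrow> B \<subseteq> X \<Longrightarrow> C \<subseteq> X \<Longrightarrow>
   \<delta> A (B \<union> C) \<longleftrightarrow> \<delta> A B \<or> \<delta> A C"
  using qp_ax1[rule_format, of X \<delta> A B C] by simp
lemma qp_empty: "quasi_proximity X \<delta> \<Longrightarrow> A \<subseteq> X \<Longrightarrow> \<not> \<delta> A {} \<and> \<not> \<delta> {} A"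
  unfolding quasi_proximity_def by simp
lemma qp_refl: "quasi_proximity X \<delta> \<Longrightarrow> x \<in> X \<Longrightarrow> \<delta> {x} {x}"
  unfolding quasi_proximity_def by simp
lemma qp_sep: "quasi_proximity X \<delta> \<Longrightarrow> A \<subseteq> X \<Longrightarrow> B \<subseteq> X \<Longrightarrow> \<not> \<delta> A B \<Longrightarrow>
    \<exists>C. C \<subseteq> X \<and> \<not> \<delta> A C \<and> \<not> \<delta> (X - C) B"
  unfolding quasi_proximity_def by simp

lemma qp_mono:
  assumes "quasi_proximity X \<delta>" "\<delta> A B" "A \<subseteq> A'" "B \<subseteq> B'" "A' \<subseteq> X" "B' \<subseteq> X"
  shows "\<delta> A' B'"
proof -
  have AX: "A \<subseteq> X" "B \<subseteq> X" using assms by auto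
  have "\<delta> (A \<union> A') B" using qp_union_l[OF assms(1) AX(1) assms(5) AX(2)] assms(2) by blast
  hence "\<delta> A' B" using assms(3) by (simp add: Un_absorb1)
  hence "\<delta> A' (B \<union> B')" using qp_union_r[OF assms(1) assms(5) AX(2) assms(6)] by blast
  thus ?thesis using assms(4) by (simp add: Un_absorb1)
qed

lemma qp_disj:
  assumes "quasi_proximity X \<delta>" "A \<subseteq> X" "B \<subseteq> X" "\<not> \<delta> A B"
  shows "A \<inter> B = {}"
proof (rule ccontr)
  assume "A \<inter> B \<noteq> {}"
  then obtain x where x: "x \<in> A" "x \<in> B" by blast
  have "\<delta> {x} {x}" using qp_refl[OF assms(1)] assms(2) x by blast
  hence "\<delta> A B" using qp_mono[OF assms(1) _ _ _ assms(2,3)] x by blast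
  thus False using assms(4) by simp
qed

lemma key_aux:
  assumes qp: "quasi_proximity X \<delta>" and fin: "finite F"
    and hU: "\<forall>A' B'. A' \<subseteq> X \<longrightarrow> B' \<subseteq> X \<longrightarrow> (A' \<times> B') \<inter> U = {} \<longrightarrow> \<not> \<delta> A' B'"
  shows "(\<forall>p\<in>F. fst p \<subseteq> X \<and> snd p \<subseteq> X \<and> \<not> \<delta> (fst p) (snd p)) \<longrightarrow>
    (\<forall>A B. A \<subseteq> X \<longrightarrow> B \<subseteq> X \<longrightarrow> (A \<times> B) \<inter> U \<inter> EE X F = {} \<longrightarrow> \<not> \<delta> A B)"
  using fin
proof (induction F rule: finite_induct)
  case empty
  show ?case
  proof (intro impI allI)
    fix A B assume h: "A \<subseteq> X" "B \<subseteq> X" "(A \<times> B) \<inter> U \<inter> EE X {} = {}"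
    have "(A \<times> B) \<inter> U = {}" using h by auto
    thus "\<not> \<delta> A B" using hU h by blast
  qed
next
  case (insert p F)
  show ?case
  proof (intro impI allI)
    fix A B assume hF: "\<forall>p\<in>insert p F. fst p \<subseteq> X \<and> snd p \<subseteq> X \<and> \<not> \<delta> (fst p) (snd p)"
      and h: "A \<subseteq> X" "B \<subseteq> X" "(A \<times> B) \<inter> U \<inter> EE X (insert p F) = {}"
    obtain A0 B0 where p: "p = (A0, B0)" by (cases p)
    have A0: "A0 \<subseteq> X" "B0 \<subseteq> X" "\<not> \<delta> A0 B0" using hF p by auto
    have IH: "\<And>A B. A \<subseteq> X \<Longrightarrow> B \<subseteq> X \<Longrightarrow> (A \<times> B) \<inter> U \<inter> EE X F = {} \<Longrightarrow> \<not> \<delta> A B"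
      using insert.IH hF by blast
    have e: "(A \<times> B) \<inter> U \<inter> (EE X F - A0 \<times> B0) = {}" using h(3) p by (simp add: EE_insert)
    have s1: "((A - A0) \<times> B) \<inter> U \<inter> EE X F \<subseteq> (A \<times> B) \<inter> U \<inter> (EE X F - A0 \<times> B0)" by blast
    have s2: "((A \<inter> A0) \<times> (B - B0)) \<inter> U \<inter> EE X F \<subseteq> (A \<times> B) \<inter> U \<inter> (EE X F - A0 \<times> B0)" by blast
    have X1: "A - A0 \<subseteq> X" "A \<inter> A0 \<subseteq> X" "B - B0 \<subseteq> X" "B \<inter> B0 \<subseteq> X" using h(1,2) by auto
    have 1: "\<not> \<delta> (A - A0) B" using IH[OF X1(1) h(2)] s1 e by blast
    have 2: "\<not> \<delta> (A \<inter> A0) (B - B0)" using IH[OF X1(2) X1(3)] s2 e by blast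
    have 3: "\<not> \<delta> (A \<inter> A0) (B \<inter> B0)"
    proof
      assume "\<delta> (A \<inter> A0) (B \<inter> B0)"
      hence "\<delta> A0 B0" by (rule qp_mono[OF qp _ Int_lower2 Int_lower2 A0(1,2)])
      thus False using A0(3) by simp
    qed
    have "\<delta> (A \<inter> A0) ((B \<inter> B0) \<union> (B - B0)) \<longleftrightarrow> \<delta> (A \<inter> A0) (B \<inter> B0) \<or> \<delta> (A \<inter> A0) (B - B0)"
      by (rule qp_union_r[OF qp X1(2) X1(4) X1(3)])
    hence "\<not> \<delta> (A \<inter> A0) ((B \<inter> B0) \<union> (B - B0))" using 2 3 by simp
    moreover have "(B \<inter> B0) \<union> (B - B0) = B" by blast
    ultimately have 4: "\<not> \<delta> (A \<inter> A0) B" by simp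
    have "\<delta> ((A \<inter> A0) \<union> (A - A0)) B \<longleftrightarrow> \<delta> (A \<inter> A0) B \<or> \<delta> (A - A0) B"
      by (rule qp_union_l[OF qp X1(2) X1(1) h(2)])
    hence "\<not> \<delta> ((A \<inter> A0) \<union> (A - A0)) B" using 1 4 by simp
    moreover have "(A \<inter> A0) \<union> (A - A0) = A" by blast
    ultimately show "\<not> \<delta> A B" by simp
  qed
qed

lemma key:
  assumes qp: "quasi_proximity X \<delta>" and g: "goodF X \<delta> F"
    and hU: "\<And>A' B'. A' \<subseteq> X \<Longrightarrow> B' \<subseteq> X \<Longrightarrow> (A' \<times> B') \<inter> U = {} \<Longrightarrow> \<not> \<delta> A' B'"
    and "A \<subseteq> X" "B \<subseteq> X" "\<delta> A B"
  shows "(A \<times> B) \<inter> U \<inter> EE X F \<noteq> {}"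
  using key_aux[OF qp, of F U] g hU assms(4-6) unfolding goodF_def by blast

lemma EE_in:
  assumes qu: "quasi_uniformity X \<U>" and fin: "finite F"
  shows "(\<forall>p\<in>F. X \<times> X - fst p \<times> snd p \<in> \<U>) \<longrightarrow> EE X F \<in> \<U>"
  using fin
proof (induction F rule: finite_induct)
  case empty
  then show ?case using qu_full[OF qu] by simp
next
  case (insert p F)
  have "EE X (insert p F) = EE X F \<inter> (X \<times> X - fst p \<times> snd p)" by (auto simp: EE_def)
  then show ?case using insert qu_int[OF qu] by simp
qed

lemma V0_qu:
  assumes qp: "quasi_proximity X \<delta>"
  shows "quasi_uniformity X (V0 X \<delta>)"
proof -
  let ?Q = "V0 X \<delta>"
  have g0: "goodF X \<delta> {}" by (simp add: goodF_def)
  have a1: "V0 X \<delta> \<noteq> {}" using g0 by (auto simp: V0_def intro!: exI[of _ "X \<times> X"])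
  have a2: "U \<subseteq> X \<times> X \<and> Id_on X \<subseteq> U" if hyp: "U \<in> V0 X \<delta>" for U
  proof -
    obtain F where F: "goodF X \<delta> F" "EE X F \<subseteq> U" "U \<subseteq> X \<times> X" using hyp unfolding V0_def by blast
    have "Id_on X \<subseteq> EE X F"
    proof
      fix z assume "z \<in> Id_on X"
      then obtain x where x: "z = (x,x)" "x \<in> X" by (auto simp: Id_on_def)
      have "\<forall>p\<in>F. (x,x) \<notin> fst p \<times> snd p"
      proof
        fix p assume "p \<in> F"
        hence "fst p \<inter> snd p = {}" using qp_disj[OF qp] F(1) by (auto simp: goodF_def)
        thus "(x,x) \<notin> fst p \<times> snd p" by auto
      qed
      thus "z \<in> EE X F" using x by (auto simp: EE_def)
    qed
    thus ?thesis using F by blast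
  qed
  have a3: "V \<in> V0 X \<delta>" if "U \<in> V0 X \<delta>" "U \<subseteq> V \<and> V \<subseteq> X \<times> X" for U V
    using that unfolding V0_def by blast
  have a4: "U \<inter> V \<in> V0 X \<delta>" if hyp: "U \<in> V0 X \<delta>" "V \<in> V0 X \<delta>" for U V
  proof -
    obtain F where F: "goodF X \<delta> F" "EE X F \<subseteq> U" "U \<subseteq> X \<times> X" using hyp(1) unfolding V0_def by blast
    obtain G where G: "goodF X \<delta> G" "EE X G \<subseteq> V" "V \<subseteq> X \<times> X" using hyp(2) unfolding V0_def by blast
    have "goodF X \<delta> (F \<union> G)" using F G by (auto simp: goodF_def)
    moreover have "EE X (F \<union> G) \<subseteq> U \<inter> V" using F G EE_Un by blast
    ultimately show ?thesis using F G unfolding V0_def by blast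
  qed
  have a5: "\<exists>W\<in>V0 X \<delta>. W O W \<subseteq> Z" if hyp: "Z \<in> V0 X \<delta>" for Z
  proof -
    obtain F where F: "goodF X \<delta> F" "EE X F \<subseteq> Z" using hyp unfolding V0_def by blast
    have "\<forall>p\<in>F. \<exists>C. C \<subseteq> X \<and> \<not> \<delta> (fst p) C \<and> \<not> \<delta> (X - C) (snd p)"
      using F(1) qp_sep[OF qp] unfolding goodF_def by blast
    then obtain c where c: "\<forall>p\<in>F. c p \<subseteq> X \<and> \<not> \<delta> (fst p) (c p) \<and> \<not> \<delta> (X - c p) (snd p)"
      by metis
    define G where "G = (\<lambda>p. (fst p, c p)) ` F \<union> (\<lambda>p. (X - c p, snd p)) ` F"
    have gG: "goodF X \<delta> G"
    proof -
      have "finite G" using F(1) by (simp add: G_def goodF_def)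
      moreover have "fst q \<subseteq> X \<and> snd q \<subseteq> X \<and> \<not> \<delta> (fst q) (snd q)" if q: "q \<in> G" for q
      proof -
        obtain p where p: "p \<in> F" "q = (fst p, c p) \<or> q = (X - c p, snd p)" using q unfolding G_def by blast
        have "fst p \<subseteq> X" "snd p \<subseteq> X" using p(1) F(1) unfolding goodF_def by blast+
        moreover have "c p \<subseteq> X" "\<not> \<delta> (fst p) (c p)" "\<not> \<delta> (X - c p) (snd p)" using p(1) c by blast+
        ultimately show ?thesis using p(2) by auto
      qed
      ultimately show ?thesis unfolding goodF_def by blast
    qed
    have "EE X G O EE X G \<subseteq> EE X F"
    proof (rule subrelI)
      fix x z assume "(x,z) \<in> EE X G O EE X G"
      then obtain y where xy: "(x,y) \<in> EE X G" and yz: "(y,z) \<in> EE X G" by blast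
      show "(x,z) \<in> EE X F"
      proof (rule ccontr)
        assume "(x,z) \<notin> EE X F"
        then obtain p where p: "p \<in> F" "x \<in> fst p" "z \<in> snd p" using xy yz by (auto simp: EE_def)
        have m1: "(fst p, c p) \<in> G" "(X - c p, snd p) \<in> G" using p(1) by (auto simp: G_def)
        have yX: "y \<in> X" using xy by (auto simp: EE_def)
        show False
        proof (cases "y \<in> c p")
          case True
          then show False using xy m1(1) p unfolding EE_def by force
        next
          case False
          then show False using yz m1(2) p yX unfolding EE_def by force
        qed
      qed
    qed
    moreover have "EE X G \<in> V0 X \<delta>" using gG EE_sub unfolding V0_def by blast
    ultimately show ?thesis using F(2) by blast
  qed
  show ?thesis unfolding quasi_uniformity_def
  proof (intro conjI)
    show "\<forall>U\<in>?Q. U \<subseteq> X \<times> X \<and> Id_on X \<subseteq> U" using a2 by blast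
    show "\<forall>U\<in>?Q. \<forall>V. U \<subseteq> V \<and> V \<subseteq> X \<times> X \<longrightarrow> V \<in> ?Q" using a3 by blast
    show "\<forall>U\<in>?Q. \<forall>V\<in>?Q. U \<inter> V \<in> ?Q" using a4 by blast
    show "\<forall>U\<in>?Q. \<exists>V\<in>?Q. V O V \<subseteq> U" using a5 by blast
  qed (rule a1)
qed

lemma V0_min:
  assumes "\<U> \<in> qu_class X \<delta>"
  shows "V0 X \<delta> \<subseteq> \<U>"
proof
  fix Z assume "Z \<in> V0 X \<delta>"
  then obtain F where F: "goodF X \<delta> F" "EE X F \<subseteq> Z" "Z \<subseteq> X \<times> X" by (auto simp: V0_def)
  have qu: "quasi_uniformity X \<U>" and pr: "\<And>A B. A \<subseteq> X \<Longrightarrow> B \<subseteq> X \<Longrightarrow> qprox_of \<U> A B \<longleftrightarrow> \<delta> A B"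
    using assms by (auto simp: qu_class_def)
  have "\<forall>p\<in>F. X \<times> X - fst p \<times> snd p \<in> \<U>"
  proof
    fix p assume p: "p \<in> F"
    hence "fst p \<subseteq> X" "snd p \<subseteq> X" "\<not> \<delta> (fst p) (snd p)" using F(1) by (auto simp: goodF_def)
    hence "\<not> qprox_of \<U> (fst p) (snd p)" using pr by blast
    then obtain U where U: "U \<in> \<U>" "(fst p \<times> snd p) \<inter> U = {}" by (auto simp: qprox_of_def)
    have "U \<subseteq> X \<times> X - fst p \<times> snd p" using U qu_sub[OF qu U(1)] by blast
    then show "X \<times> X - fst p \<times> snd p \<in> \<U>" using qu_up[OF qu U(1)] by blast
  qed
  hence "EE X F \<in> \<U>" using EE_in[OF qu] F(1) by (auto simp: goodF_def)
  thus "Z \<in> \<U>" using qu_up[OF qu _ F(2) F(3)] by blast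
qed

lemma V0_class:
  assumes qp: "quasi_proximity X \<delta>"
  shows "V0 X \<delta> \<in> qu_class X \<delta>"
proof -
  have "qprox_of (V0 X \<delta>) A B \<longleftrightarrow> \<delta> A B" if AB: "A \<subseteq> X" "B \<subseteq> X" for A B
  proof
    assume d: "\<delta> A B"
    show "qprox_of (V0 X \<delta>) A B" unfolding qprox_of_def
    proof
      fix Z assume "Z \<in> V0 X \<delta>"
      then obtain F where F: "goodF X \<delta> F" "EE X F \<subseteq> Z" by (auto simp: V0_def)
      have hU: "\<not> \<delta> A' B'" if "A' \<subseteq> X" "B' \<subseteq> X" "(A' \<times> B') \<inter> (X \<times> X) = {}" for A' B'
      proof -
        have "A' = {} \<or> B' = {}" using that by blast
        thus ?thesis using qp_empty[OF qp] that by blast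
      qed
      have "(A \<times> B) \<inter> (X \<times> X) \<inter> EE X F \<noteq> {}" by (rule key[OF qp F(1) hU AB d])
      thus "(A \<times> B) \<inter> Z \<noteq> {}" using F(2) by blast
    qed
  next
    assume nd: "qprox_of (V0 X \<delta>) A B"
    show "\<delta> A B"
    proof (rule ccontr)
      assume "\<not> \<delta> A B"
      hence g: "goodF X \<delta> {(A,B)}" using AB by (simp add: goodF_def)
      hence "EE X {(A,B)} \<in> V0 X \<delta>" using EE_sub unfolding V0_def by blast
      moreover have "(A \<times> B) \<inter> EE X {(A,B)} = {}" by (auto simp: EE_def)
      ultimately show False using nd unfolding qprox_of_def by blast
    qed
  qed
  thus ?thesis using V0_qu[OF qp] unfolding qu_class_def by blast
qed

lemma coarsest_eq:
  assumes "quasi_proximity X \<delta>" shows "coarsest_qu X \<delta> = V0 X \<delta>"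
  unfolding coarsest_qu_def
proof (rule the_equality)
  show "V0 X \<delta> \<in> qu_class X \<delta> \<and> (\<forall>\<U>\<in>qu_class X \<delta>. V0 X \<delta> \<subseteq> \<U>)"
    using V0_class[OF assms] V0_min by blast
  fix \<V> assume "\<V> \<in> qu_class X \<delta> \<and> (\<forall>\<U>\<in>qu_class X \<delta>. \<V> \<subseteq> \<U>)"
  thus "\<V> = V0 X \<delta>" using V0_class[OF assms] V0_min by blast
qed

lemma compat:
  assumes qu: "quasi_uniformity (topspace \<tau>) \<W>" and qc: "qp_compatible \<tau> \<delta>"
    and pr: "\<And>A B. A \<subseteq> topspace \<tau> \<Longrightarrow> B \<subseteq> topspace \<tau> \<Longrightarrow> qprox_of \<W> A B \<longleftrightarrow> \<delta> A B"
  shows "qu_compatible \<tau> \<W>"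
  unfolding qu_compatible_def
proof (intro allI)
  fix G
  let ?X = "topspace \<tau>"
  show "openin \<tau> G \<longleftrightarrow> G \<subseteq> ?X \<and> (\<forall>x\<in>G. \<exists>U\<in>\<W>. U `` {x} \<subseteq> G)"
  proof (cases "G \<subseteq> ?X")
    case False
    hence "\<not> openin \<tau> G" by (meson openin_subset)
    thus ?thesis using False by simp
  next
    case True
    have cl: "\<tau> closure_of (?X - G) = {x \<in> ?X. \<delta> {x} (?X - G)}"
      using qc unfolding qp_compatible_def by blast
    have "openin \<tau> G \<longleftrightarrow> closedin \<tau> (?X - G)" using True by (simp add: openin_closedin_eq)
    also have "\<dots> \<longleftrightarrow> \<tau> closure_of (?X - G) \<subseteq> ?X - G" by (metis Diff_subset closure_of_subset_eq)
    also have "\<dots> \<longleftrightarrow> (\<forall>x\<in>G. \<not> \<delta> {x} (?X - G))" unfolding cl using True by blast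
    also have "\<dots> \<longleftrightarrow> (\<forall>x\<in>G. \<exists>U\<in>\<W>. U `` {x} \<subseteq> G)"
    proof -
      have "\<not> \<delta> {x} (?X - G) \<longleftrightarrow> (\<exists>U\<in>\<W>. U `` {x} \<subseteq> G)" if x: "x \<in> G" for x
      proof -
        have "\<not> \<delta> {x} (?X - G) \<longleftrightarrow> \<not> qprox_of \<W> {x} (?X - G)"
          using pr[of "{x}" "?X - G"] x True by auto
        also have "\<dots> \<longleftrightarrow> (\<exists>U\<in>\<W>. ({x} \<times> (?X - G)) \<inter> U = {})" by (auto simp: qprox_of_def)
        also have "\<dots> \<longleftrightarrow> (\<exists>U\<in>\<W>. U `` {x} \<subseteq> G)"
        proof -
          have "({x} \<times> (?X - G)) \<inter> U = {} \<longleftrightarrow> U `` {x} \<subseteq> G" if "U \<in> \<W>" for U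
          proof -
            have "U \<subseteq> ?X \<times> ?X" using qu_sub[OF qu that] .
            thus ?thesis by auto
          qed
          thus ?thesis by blast
        qed
        finally show ?thesis .
      qed
      thus ?thesis by blast
    qed
    finally show ?thesis using True by simp
  qed
qed

lemma join_qu:
  assumes qu: "quasi_uniformity X \<U>" and qv: "quasi_uniformity X \<V>"
  shows "quasi_uniformity X (join X \<U> \<V>)"
proof -
  let ?Q = "join X \<U> \<V>"
  have a1: "join X \<U> \<V> \<noteq> {}" using qu_full[OF qu] qu_full[OF qv] unfolding join_def by blast
  have a2: "Z \<subseteq> X \<times> X \<and> Id_on X \<subseteq> Z" if hyp: "Z \<in> join X \<U> \<V>" for Z
    using that qu_id[OF qu] qu_id[OF qv] unfolding join_def by blast
  have a3: "W \<in> join X \<U> \<V>" if "Z \<in> join X \<U> \<V>" "Z \<subseteq> W \<and> W \<subseteq> X \<times> X" for Z W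
    using that unfolding join_def by blast
  have a4: "Z \<inter> W \<in> join X \<U> \<V>" if hyp: "Z \<in> join X \<U> \<V>" "W \<in> join X \<U> \<V>" for Z W
  proof -
    obtain U1 V1 where 1: "U1 \<in> \<U>" "V1 \<in> \<V>" "U1 \<inter> V1 \<subseteq> Z" "Z \<subseteq> X \<times> X" using hyp(1) unfolding join_def by blast
    obtain U2 V2 where 2: "U2 \<in> \<U>" "V2 \<in> \<V>" "U2 \<inter> V2 \<subseteq> W" using hyp(2) unfolding join_def by blast
    have "U1 \<inter> U2 \<in> \<U>" "V1 \<inter> V2 \<in> \<V>" using qu_int[OF qu] qu_int[OF qv] 1 2 by auto
    moreover have "(U1 \<inter> U2) \<inter> (V1 \<inter> V2) \<subseteq> Z \<inter> W" using 1 2 by blast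
    ultimately show ?thesis using 1 unfolding join_def by blast
  qed
  have a5: "\<exists>W\<in>join X \<U> \<V>. W O W \<subseteq> Z" if hyp: "Z \<in> join X \<U> \<V>" for Z
  proof -
    obtain U V where 1: "U \<in> \<U>" "V \<in> \<V>" "U \<inter> V \<subseteq> Z" using hyp unfolding join_def by blast
    obtain U' where U': "U' \<in> \<U>" "U' O U' \<subseteq> U" using qu_comp[OF qu 1(1)] by blast
    obtain V' where V': "V' \<in> \<V>" "V' O V' \<subseteq> V" using qu_comp[OF qv 1(2)] by blast
    have "U' \<inter> V' \<in> join X \<U> \<V>" using U' V' qu_sub[OF qu U'(1)] unfolding join_def by blast
    moreover have "(U' \<inter> V') O (U' \<inter> V') \<subseteq> Z" using U' V' 1 by blast
    ultimately show ?thesis by blast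
  qed
  show ?thesis unfolding quasi_uniformity_def
  proof (intro conjI)
    show "\<forall>U\<in>?Q. U \<subseteq> X \<times> X \<and> Id_on X \<subseteq> U" using a2 by blast
    show "\<forall>U\<in>?Q. \<forall>V. U \<subseteq> V \<and> V \<subseteq> X \<times> X \<longrightarrow> V \<in> ?Q" using a3 by blast
    show "\<forall>U\<in>?Q. \<forall>V\<in>?Q. U \<inter> V \<in> ?Q" using a4 by blast
    show "\<forall>U\<in>?Q. \<exists>V\<in>?Q. V O V \<subseteq> U" using a5 by blast
  qed (rule a1)
qed

lemma tb_lemma:
  assumes qp2: "quasi_proximity X \<delta>2"
    and U1: "\<U> \<in> qu_class X \<delta>1" and sub: "\<U> \<subseteq> V0 X \<delta>2"
  shows "\<U> \<subseteq> V0 X \<delta>1"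
proof
  fix U0 assume U0: "U0 \<in> \<U>"
  have qu: "quasi_uniformity X \<U>" and pr: "\<And>A B. A \<subseteq> X \<Longrightarrow> B \<subseteq> X \<Longrightarrow> qprox_of \<U> A B \<longleftrightarrow> \<delta>1 A B"
    using U1 by (auto simp: qu_class_def)
  obtain V where V: "V \<in> \<U>" "V O V \<subseteq> U0" using qu_comp[OF qu U0] by blast
  have "V \<in> V0 X \<delta>2" using sub V(1) by blast
  then obtain F where F: "goodF X \<delta>2 F" "EE X F \<subseteq> V" unfolding V0_def by blast
  define C where "C S = {x \<in> X. \<forall>p\<in>F. x \<in> fst p \<longleftrightarrow> p \<in> S}" for S
  have CC: "C S \<times> C S \<subseteq> V" for S
  proof -
    have "C S \<times> C S \<subseteq> EE X F"
    proof (rule subrelI)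
      fix x y assume xy: "(x,y) \<in> C S \<times> C S"
      show "(x,y) \<in> EE X F"
      proof (rule ccontr)
        assume "(x,y) \<notin> EE X F"
        then obtain p where p: "p \<in> F" "x \<in> fst p" "y \<in> snd p" using xy by (auto simp: EE_def C_def)
        have "y \<in> fst p" using xy p by (auto simp: C_def)
        moreover have "fst p \<inter> snd p = {}" using qp_disj[OF qp2] F(1) p(1) by (auto simp: goodF_def)
        ultimately show False using p by blast
      qed
    qed
    thus ?thesis using F(2) by blast
  qed
  define G where "G = (\<lambda>S. (C S, X - V `` C S)) ` Pow F"
  have gG: "goodF X \<delta>1 G"
  proof -
    have "finite G" using F(1) by (auto simp: G_def goodF_def)
    moreover have "C S \<subseteq> X \<and> X - V `` C S \<subseteq> X \<and> \<not> \<delta>1 (C S) (X - V `` C S)" for S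
    proof -
      have "(C S \<times> (X - V `` C S)) \<inter> V = {}" by blast
      hence "\<not> qprox_of \<U> (C S) (X - V `` C S)" using V(1) by (auto simp: qprox_of_def)
      moreover have "C S \<subseteq> X" by (auto simp: C_def)
      ultimately show ?thesis using pr by blast
    qed
    ultimately show ?thesis by (auto simp: goodF_def G_def)
  qed
  have "EE X G \<subseteq> U0"
  proof (rule subrelI)
    fix x y assume xy: "(x,y) \<in> EE X G"
    hence xX: "x \<in> X" "y \<in> X" by (auto simp: EE_def)
    define S where "S = {p\<in>F. x \<in> fst p}"
    have xS: "x \<in> C S" using xX by (auto simp: C_def S_def)
    have "(C S, X - V `` C S) \<in> G" by (auto simp: G_def S_def)
    hence "(x,y) \<notin> C S \<times> (X - V `` C S)" using xy unfolding EE_def by force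
    hence "y \<in> V `` C S" using xS xX by blast
    then obtain a where a: "a \<in> C S" "(a,y) \<in> V" by blast
    have "(x,a) \<in> V" using CC xS a(1) by blast
    thus "(x,y) \<in> U0" using a(2) V(2) by blast
  qed
  moreover have "U0 \<subseteq> X \<times> X" using qu_sub[OF qu U0] .
  ultimately show "U0 \<in> V0 X \<delta>1" using gG unfolding V0_def by blast
qed

theorem corollary2p7:
  fixes \<tau> :: "'a topology" and \<delta>1 \<delta>2 :: "'a set \<Rightarrow> 'a set \<Rightarrow> bool"
  assumes "quasi_proximity (topspace \<tau>) \<delta>1" and "qp_compatible \<tau> \<delta>1"
    and "quasi_proximity (topspace \<tau>) \<delta>2" and "qp_compatible \<tau> \<delta>2"
    and "qp_coarser (topspace \<tau>) \<delta>1 \<delta>2"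
    and "qu_transitive (coarsest_qu (topspace \<tau>) \<delta>1)"
    and "qu_transitive (coarsest_qu (topspace \<tau>) \<delta>2)"
    and "\<exists>\<U>\<in>qu_class (topspace \<tau>) \<delta>1 \<inter> trans_qus \<tau>.
           \<exists>\<V>\<in>qu_class (topspace \<tau>) \<delta>1 \<inter> trans_qus \<tau>. \<U> \<noteq> \<V>"
  shows "\<exists>\<U>\<in>qu_class (topspace \<tau>) \<delta>2 \<inter> trans_qus \<tau>.
           \<exists>\<V>\<in>qu_class (topspace \<tau>) \<delta>2 \<inter> trans_qus \<tau>. \<U> \<noteq> \<V>"
proof -
  let ?X = "topspace \<tau>"
  note qp1 = assms(1) and qp2 = assms(3)
  have c2: "coarsest_qu ?X \<delta>2 = V0 ?X \<delta>2" using coarsest_eq[OF qp2] .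
  have cc: "\<And>A B. A \<subseteq> ?X \<Longrightarrow> B \<subseteq> ?X \<Longrightarrow> \<delta>2 A B \<Longrightarrow> \<delta>1 A B"
    using assms(5) unfolding qp_coarser_def by blast
  obtain U1 U2 where U1: "U1 \<in> qu_class ?X \<delta>1 \<inter> trans_qus \<tau>"
    and U2: "U2 \<in> qu_class ?X \<delta>1 \<inter> trans_qus \<tau>" and ne: "U1 \<noteq> U2" using assms(8) by blast
  have s1: "V0 ?X \<delta>1 \<subseteq> U1" "V0 ?X \<delta>1 \<subseteq> U2" using V0_min[of U1] V0_min[of U2] U1 U2 by simp_all
  obtain \<U> where U: "\<U> \<in> qu_class ?X \<delta>1 \<inter> trans_qus \<tau>" and nsub: "\<not> \<U> \<subseteq> V0 ?X \<delta>1"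
  proof -
    have "\<not> U1 \<subseteq> V0 ?X \<delta>1 \<or> \<not> U2 \<subseteq> V0 ?X \<delta>1" using ne s1 by blast
    thus ?thesis using that[OF U1] that[OF U2] by blast
  qed
  have quU: "quasi_uniformity ?X \<U>" and trU: "qu_transitive \<U>"
    and prU: "\<And>A B. A \<subseteq> ?X \<Longrightarrow> B \<subseteq> ?X \<Longrightarrow> qprox_of \<U> A B \<longleftrightarrow> \<delta>1 A B"
    using U by (auto simp: qu_class_def trans_qus_def)
  have V2class: "V0 ?X \<delta>2 \<in> qu_class ?X \<delta>2" using V0_class[OF qp2] .
  have quV2: "quasi_uniformity ?X (V0 ?X \<delta>2)" using V0_qu[OF qp2] .
  have prV2: "\<And>A B. A \<subseteq> ?X \<Longrightarrow> B \<subseteq> ?X \<Longrightarrow> qprox_of (V0 ?X \<delta>2) A B \<longleftrightarrow> \<delta>2 A B"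
    using V2class by (auto simp: qu_class_def)
  have trV2: "qu_transitive (V0 ?X \<delta>2)" using assms(7) c2 by simp
  define \<W> where "\<W> = join ?X \<U> (V0 ?X \<delta>2)"
  have quW: "quasi_uniformity ?X \<W>" unfolding \<W>_def by (rule join_qu[OF quU quV2])
  have prW: "qprox_of \<W> A B \<longleftrightarrow> \<delta>2 A B" if AB: "A \<subseteq> ?X" "B \<subseteq> ?X" for A B
  proof
    assume nd: "qprox_of \<W> A B"
    show "\<delta>2 A B"
    proof (rule ccontr)
      assume "\<not> \<delta>2 A B"
      hence g: "goodF ?X \<delta>2 {(A,B)}" using AB by (simp add: goodF_def)
      have E: "EE ?X {(A,B)} \<in> V0 ?X \<delta>2" unfolding V0_def using g EE_sub by blast
      have "?X \<times> ?X \<inter> EE ?X {(A,B)} \<in> \<W>" unfolding \<W>_def join_def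
      proof (intro CollectI conjI)
        show "?X \<times> ?X \<inter> EE ?X {(A,B)} \<subseteq> ?X \<times> ?X" by blast
        show "\<exists>U\<in>\<U>. \<exists>V\<in>V0 ?X \<delta>2. U \<inter> V \<subseteq> ?X \<times> ?X \<inter> EE ?X {(A,B)}"
          using qu_full[OF quU] E by blast
      qed
      moreover have "(A \<times> B) \<inter> (?X \<times> ?X \<inter> EE ?X {(A,B)}) = {}" by (auto simp: EE_def)
      ultimately show False using nd unfolding qprox_of_def by blast
    qed
  next
    assume d: "\<delta>2 A B"
    show "qprox_of \<W> A B" unfolding qprox_of_def
    proof
      fix Z assume "Z \<in> \<W>"
      then obtain U V where UV: "U \<in> \<U>" "V \<in> V0 ?X \<delta>2" "U \<inter> V \<subseteq> Z" unfolding \<W>_def join_def by blast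
      obtain F where F: "goodF ?X \<delta>2 F" "EE ?X F \<subseteq> V" using UV(2) unfolding V0_def by blast
      have hU: "\<not> \<delta>2 A' B'" if "A' \<subseteq> ?X" "B' \<subseteq> ?X" "(A' \<times> B') \<inter> U = {}" for A' B'
      proof -
        have "\<not> qprox_of \<U> A' B'" using that UV(1) unfolding qprox_of_def by blast
        hence "\<not> \<delta>1 A' B'" using prU[OF that(1,2)] by simp
        thus ?thesis using cc[OF that(1,2)] by blast
      qed
      have "(A \<times> B) \<inter> U \<inter> EE ?X F \<noteq> {}" by (rule key[OF qp2 F(1) hU AB d])
      thus "(A \<times> B) \<inter> Z \<noteq> {}" using F(2) UV(3) by blast
    qed
  qed
  have trW: "qu_transitive \<W>" unfolding qu_transitive_def
  proof
    fix Z assume "Z \<in> \<W>"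
    then obtain U V where UV: "U \<in> \<U>" "V \<in> V0 ?X \<delta>2" "U \<inter> V \<subseteq> Z" unfolding \<W>_def join_def by blast
    obtain U' where U': "U' \<in> \<U>" "U' \<subseteq> U" "trans U'" using trU UV(1) unfolding qu_transitive_def by blast
    obtain V' where V': "V' \<in> V0 ?X \<delta>2" "V' \<subseteq> V" "trans V'" using trV2 UV(2) unfolding qu_transitive_def by blast
    have "U' \<inter> V' \<in> \<W>" using U' V' qu_sub[OF quU U'(1)] unfolding \<W>_def join_def by blast
    moreover have "trans (U' \<inter> V')" using U'(3) V'(3) by (rule trans_Int)
    ultimately show "\<exists>W\<in>\<W>. W \<subseteq> Z \<and> trans W" using U' V' UV(3) by blast
  qed
  have subW: "\<U> \<subseteq> \<W>"
  proof
    fix U assume "U \<in> \<U>"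
    moreover have "U \<inter> (?X \<times> ?X) \<subseteq> U" by blast
    ultimately show "U \<in> \<W>" using qu_full[OF quV2] qu_sub[OF quU] unfolding \<W>_def join_def by blast
  qed
  have neW: "\<W> \<noteq> V0 ?X \<delta>2"
  proof
    assume "\<W> = V0 ?X \<delta>2"
    hence "\<U> \<subseteq> V0 ?X \<delta>2" using subW by blast
    hence "\<U> \<subseteq> V0 ?X \<delta>1" using tb_lemma[OF qp2] U by blast
    thus False using nsub by blast
  qed
  have cW: "qu_compatible \<tau> \<W>" using compat[OF quW assms(4) prW] .
  have cV: "qu_compatible \<tau> (V0 ?X \<delta>2)" using compat[OF quV2 assms(4) prV2] .
  have Wmem: "\<W> \<in> qu_class ?X \<delta>2 \<inter> trans_qus \<tau>"
    using quW prW trW cW by (simp add: qu_class_def trans_qus_def)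
  have Vmem: "V0 ?X \<delta>2 \<in> qu_class ?X \<delta>2 \<inter> trans_qus \<tau>"
    using V2class quV2 trV2 cV by (simp add: trans_qus_def)
  show ?thesis using Wmem Vmem neW by blast
qed

end
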